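(* For every graph $G$ and integer $k$, every execution path of naive-fvs$(G,k,\emptyset)$ that leads to a solution satisfies $|F'|\le 3|V_-|$.
   Context: All graphs are finite, simple and undirected; $d_G(v)$ denotes the degree of $v$ in $G$, $G-S$ denotes deletion of a vertex set $S$, and $G[S]$ the induced subgraph. A feedback vertex set of $G$ is a set $V_-\subseteq V(G)$ such that $G-V_-$ is a forest. Algorithm naive-fvs$(G,k,F)$ (with $k$ an integer and $F\subseteq V(G)$ inducing a forest) returns a set of vertices or ``NO'' as follows (all choices among several candidates are arbitrary; degrees are in the current graph $G$): (0) If $k<0$ return NO; if $V(G)=\emptyset$ return $\emptyset$. (1) If some vertex $v$ has degree less than $2$, return naive-fvs$(G-\{v\},k,F\setminus\{v\})$. (2) If some $v\in V(G)\setminus F$ has two neighbors in the same connected component of $G[F]$, let $X=$ naive-fvs$(G-\{v\},k-1,F)$ and return $X\cup\{v\}$ (NO if $X$ is NO). (3) Pick $v\in V(G)\setminus F$ of maximum degree. (4) If $d(v)=2$: set $X=\emptyset$; while $G$ contains a cycle $C$, take any vertex $x$ of $C$ not in $F$, add $x$ to $X$ and delete $x$ from $G$; then return $X$ if $|X|\le k$, else NO. (5) Let $X=$ naive-fvs$(G-\{v\},k-1,F)$; if $X$ is not NO, return $X\cup\{v\}$. (6) Return naive-fvs$(G,k,F\cup\{v\})$. An execution path is a sequence of calls $c_0,c_1,\dots,c_t$ where $c_0=$ naive-fvs$(G,k,\emptyset)$; for each $j<t$, $c_{j+1}$ is the recursive call made by $c_j$ in step 1 or step 2, or, if $c_j$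 reaches step 5, either the call of step 5 or the call of step 6 (the latter considered even if the algorithm would not actually make it); and $c_t$ terminates in step 0 or step 4 without recursion. It leads to a solution if $c_t$ returns a set (not NO). $V_-$ denotes the set of vertices deleted along the path in step 2, in step 5 (when the path follows the step-5 call), and in the loop of step 4 of $c_t$; $F'$ denotes the set of vertices added to $F$ by step 6 (when the path follows the step-6 call). *)

theory Defs
  imports Main
begin

type_synonym 'a graph = "'a set \<times> 'a set set"

definition verts :: "'a graph \<Rightarrow> 'a set" where "verts G = fst G"
definition edges :: "'a graph \<Rightarrow> 'a set set" where "edges G = snd G"

definition simple_graph :: "'a graph \<Rightarrow> bool" where
  "simple_graph G \<longleftrightarrow> finite (verts G) \<and>
     (\<forall>e \<in> edges G. \<exists>u w. u \<noteq> w \<and> u \<in> verts G \<and> w \<in> verts G \<and> e = {u, w})"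

definition del_verts :: "'a graph \<Rightarrow> 'a set \<Rightarrow> 'a graph" where
  "del_verts G S = (verts G - S, {e \<in> edges G. e \<inter> S = {}})"

definition adj :: "'a graph \<Rightarrow> 'a \<Rightarrow> 'a \<Rightarrow> bool" where
  "adj G u w \<longleftrightarrow> {u, w} \<in> edges G"

definition deg :: "'a graph \<Rightarrow> 'a \<Rightarrow> nat" where
  "deg G v = card {e \<in> edges G. v \<in> e}"

definition same_comp :: "'a graph \<Rightarrow> 'a set \<Rightarrow> 'a \<Rightarrow> 'a \<Rightarrow> bool" where
  "same_comp G F u w \<longleftrightarrow> u \<in> F \<and> w \<in> F \<and>
     (u, w) \<in> {(a, b). a \<in> F \<and> b \<in> F \<and> adj G a b}\<^sup>*"

definition two_nbrs_same_comp :: "'a graph \<Rightarrow> 'a set \<Rightarrow> 'a \<Rightarrow> bool" where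
  "two_nbrs_same_comp G F v \<longleftrightarrow>
     (\<exists>u w. u \<noteq> w \<and> adj G v u \<and> adj G v w \<and> same_comp G F u w)"

definition is_cycle :: "'a graph \<Rightarrow> 'a list \<Rightarrow> bool" where
  "is_cycle G C \<longleftrightarrow> length C \<ge> 3 \<and> distinct C \<and> set C \<subseteq> verts G \<and>
     (\<forall>i < length C. adj G (C ! i) (C ! ((i + 1) mod length C)))"

definition has_cycle :: "'a graph \<Rightarrow> bool" where
  "has_cycle G \<longleftrightarrow> (\<exists>C. is_cycle G C)"

text \<open>Possible outcomes X of the loop of step 4 (with F fixed).\<close>
inductive loop_result :: "'a graph \<Rightarrow> 'a set \<Rightarrow> 'a set \<Rightarrow> bool" where
  loop_stop: "\<not> has_cycle G \<Longrightarrow> loop_result G F {}"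
| loop_step: "is_cycle G C \<Longrightarrow> x \<in> set C \<Longrightarrow> x \<notin> F \<Longrightarrow>
     loop_result (del_verts G {x}) F X \<Longrightarrow> loop_result G F (insert x X)"

definition reaches_step3 :: "'a graph \<Rightarrow> int \<Rightarrow> 'a set \<Rightarrow> 'a \<Rightarrow> bool" where
  "reaches_step3 G k F v \<longleftrightarrow> k \<ge> 0 \<and> verts G \<noteq> {} \<and>
     (\<forall>u \<in> verts G. deg G u \<ge> 2) \<and>
     (\<forall>u \<in> verts G - F. \<not> two_nbrs_same_comp G F u) \<and>
     v \<in> verts G - F \<and> (\<forall>u \<in> verts G - F. deg G u \<le> deg G v)"

text \<open>sol_path G k F Vm Fp: there is an execution path starting with the call
  naive-fvs(G,k,F) that leads to a solution, along which the set of deleted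
  vertices (V_-) is Vm and the set of vertices added to F by step 6 (F') is Fp.\<close>
inductive sol_path :: "'a graph \<Rightarrow> int \<Rightarrow> 'a set \<Rightarrow> 'a set \<Rightarrow> 'a set \<Rightarrow> bool" where
  step0: "k \<ge> 0 \<Longrightarrow> verts G = {} \<Longrightarrow> sol_path G k F {} {}"
| step1: "k \<ge> 0 \<Longrightarrow> v \<in> verts G \<Longrightarrow> deg G v < 2 \<Longrightarrow>
     sol_path (del_verts G {v}) k (F - {v}) Vm Fp \<Longrightarrow> sol_path G k F Vm Fp"
| step2: "k \<ge> 0 \<Longrightarrow> verts G \<noteq> {} \<Longrightarrow> (\<forall>u \<in> verts G. deg G u \<ge> 2) \<Longrightarrow>
     v \<in> verts G - F \<Longrightarrow> two_nbrs_same_comp G F v \<Longrightarrow>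
     sol_path (del_verts G {v}) (k - 1) F Vm Fp \<Longrightarrow> sol_path G k F (insert v Vm) Fp"
| step4: "reaches_step3 G k F v \<Longrightarrow> deg G v = 2 \<Longrightarrow> loop_result G F X \<Longrightarrow>
     int (card X) \<le> k \<Longrightarrow> sol_path G k F X {}"
| step5: "reaches_step3 G k F v \<Longrightarrow> deg G v \<noteq> 2 \<Longrightarrow>
     sol_path (del_verts G {v}) (k - 1) F Vm Fp \<Longrightarrow> sol_path G k F (insert v Vm) Fp"
| step6: "reaches_step3 G k F v \<Longrightarrow> deg G v \<noteq> 2 \<Longrightarrow>
     sol_path G k (insert v F) Vm Fp \<Longrightarrow> sol_path G k F Vm (insert v Fp)"

end

theory Submission
  imports Defs
begin

lemma verts_del[simp]: "verts (del_verts G S) = verts G - S"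
  by (simp add: del_verts_def verts_def)

lemma edges_del[simp]: "edges (del_verts G S) = {e \<in> edges G. e \<inter> S = {}}"
  by (simp add: del_verts_def edges_def)

lemma simple_del: "simple_graph G \<Longrightarrow> simple_graph (del_verts G S)"
  unfolding simple_graph_def
proof (intro conjI ballI)
  assume a: "finite (verts G) \<and> (\<forall>e\<in>edges G. \<exists>u w. u \<noteq> w \<and> u \<in> verts G \<and> w \<in> verts G \<and> e = {u, w})"
  then show "finite (verts (del_verts G S))" by simp
  fix e assume e: "e \<in> edges (del_verts G S)"
  then obtain u w where uw: "u \<noteq> w" "u \<in> verts G" "w \<in> verts G" "e = {u, w}" using a by auto
  moreover have "u \<notin> S" "w \<notin> S" using e uw by auto
  ultimately show "\<exists>u w. u \<noteq> w \<and> u \<in> verts (del_verts G S) \<and> w \<in> verts (del_verts G S) \<and> e = {u, w}"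
    by auto
qed

lemma edge_form: "simple_graph G \<Longrightarrow> e \<in> edges G \<Longrightarrow> \<exists>u w. u \<noteq> w \<and> u \<in> verts G \<and> w \<in> verts G \<and> e = {u, w}"
  unfolding simple_graph_def by (elim conjE) (rule bspec)

lemma finite_edges: "simple_graph G \<Longrightarrow> finite (edges G)"
proof -
  assume sg: "simple_graph G"
  have "edges G \<subseteq> Pow (verts G)"
  proof
    fix e assume "e \<in> edges G"
    then obtain u w where "u \<in> verts G" "w \<in> verts G" "e = {u, w}" using edge_form[OF sg] by blast
    then show "e \<in> Pow (verts G)" by simp
  qed
  moreover have "finite (Pow (verts G))" using sg unfolding simple_graph_def by simp
  ultimately show ?thesis by (rule finite_subset)
qed

lemma edge_eq:
  assumes sg: "simple_graph G" and e: "e \<in> edges G" and "x \<in> e" "y \<in> e" "x \<noteq> y"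
  shows "e = {x, y}"
proof -
  obtain u w where "u \<noteq> w" "e = {u, w}" using edge_form[OF sg e] by blast
  then show ?thesis using assms(3-5) by auto
qed

lemma deg_del:
  assumes sg: "simple_graph G" and xy: "x \<noteq> y"
  shows "deg G x = deg (del_verts G {y}) x + (if {x, y} \<in> edges G then 1 else 0)"
proof -
  let ?A = "{e \<in> edges G. x \<in> e}"
  have fin: "finite ?A" using finite_edges[OF sg] by auto
  have B: "{e \<in> edges (del_verts G {y}). x \<in> e} = ?A - {{x, y}}"
  proof (intro set_eqI iffI)
    fix e assume "e \<in> {e \<in> edges (del_verts G {y}). x \<in> e}"
    then have "e \<in> edges G" "x \<in> e" "y \<notin> e" by auto
    then show "e \<in> ?A - {{x, y}}" by auto
  next
    fix e assume "e \<in> ?A - {{x, y}}"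
    then have e: "e \<in> edges G" "x \<in> e" "e \<noteq> {x, y}" by auto
    have "y \<notin> e"
    proof
      assume "y \<in> e"
      then have "e = {x, y}" using edge_eq[OF sg e(1) e(2) _ xy] by simp
      with e(3) show False by simp
    qed
    then show "e \<in> {e \<in> edges (del_verts G {y}). x \<in> e}" using e by auto
  qed
  show ?thesis
  proof (cases "{x, y} \<in> edges G")
    case True
    then have mem: "{x,y} \<in> ?A" by auto
    have "Suc (card (?A - {{x,y}})) = card ?A" by (rule card_Suc_Diff1[OF fin mem])
    then have "card ?A = card (?A - {{x,y}}) + 1" by simp
    then show ?thesis using True B unfolding deg_def by simp
  next
    case False
    then have "?A - {{x,y}} = ?A" by auto
    then show ?thesis using False B unfolding deg_def by simp
  qed
qed

lemma deg_del_le: "simple_graph G \<Longrightarrow> x \<noteq> y \<Longrightarrow> deg (del_verts G {y}) x \<le> deg G x"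
  using deg_del[of G x y] by simp

lemma deg_nbrs:
  assumes sg: "simple_graph G"
  shows "card {x \<in> verts G - {y}. {x, y} \<in> edges G} = deg G y"
proof -
  have "bij_betw (\<lambda>x. {x, y}) {x \<in> verts G - {y}. {x, y} \<in> edges G} {e \<in> edges G. y \<in> e}"
  proof (rule bij_betwI')
    fix a b assume ha: "a \<in> {x \<in> verts G - {y}. {x, y} \<in> edges G}" and "b \<in> {x \<in> verts G - {y}. {x, y} \<in> edges G}"
    show "({a, y} = {b, y}) = (a = b)"
    proof
      assume "{a, y} = {b, y}"
      then have "a \<in> {b, y}" by blast
      then show "a = b" using ha by blast
    qed simp
  next
    fix a assume "a \<in> {x \<in> verts G - {y}. {x, y} \<in> edges G}"
    then show "{a, y} \<in> {e \<in> edges G. y \<in> e}" by auto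
  next
    fix e assume e: "e \<in> {e \<in> edges G. y \<in> e}"
    then obtain u w where uw: "u \<noteq> w" "u \<in> verts G" "w \<in> verts G" "e = {u, w}"
      using sg unfolding simple_graph_def by blast
    show "\<exists>a \<in> {x \<in> verts G - {y}. {x, y} \<in> edges G}. e = {a, y}"
    proof (cases "u = y")
      case True
      then show ?thesis using uw e by (intro bexI[of _ w]) (auto simp: insert_commute)
    next
      case False
      then have "w = y" using uw e by auto
      then show ?thesis using uw e False by (intro bexI[of _ u]) auto
    qed
  qed
  then show ?thesis unfolding deg_def by (simp add: bij_betw_same_card)
qed

lemma sum_del:
  assumes sg: "simple_graph G" and y: "y \<in> verts G"
    and mono: "\<And>x d. g x d \<le> g x (d - 1) + 1"
  shows "(\<Sum>x\<in>verts G. g x (int (deg G x))) \<le> g y (int (deg G y)) + int (deg G y)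
           + (\<Sum>x\<in>verts (del_verts G {y}). g x (int (deg (del_verts G {y}) x)))"
proof -
  have fin: "finite (verts G)" using sg unfolding simple_graph_def by auto
  let ?I = "\<lambda>x. if {x, y} \<in> edges G then (1::int) else 0"
  have 1: "(\<Sum>x\<in>verts G. g x (int (deg G x))) = g y (int (deg G y)) + (\<Sum>x\<in>verts G - {y}. g x (int (deg G x)))"
    using sum.remove[OF fin y] by simp
  have 2: "g x (int (deg G x)) \<le> g x (int (deg (del_verts G {y}) x)) + ?I x" if "x \<in> verts G - {y}" for x
  proof -
    have d: "deg G x = deg (del_verts G {y}) x + (if {x, y} \<in> edges G then 1 else 0)"
      using deg_del[OF sg, of x y] that by auto
    show ?thesis
    proof (cases "{x, y} \<in> edges G")
      case True
      then have "int (deg (del_verts G {y}) x) = int (deg G x) - 1" using d by simp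
      then show ?thesis using mono[of x "int (deg G x)"] True by simp
    next
      case False then show ?thesis using d by simp
    qed
  qed
  have 3: "(\<Sum>x\<in>verts G - {y}. g x (int (deg G x))) \<le> (\<Sum>x\<in>verts G - {y}. g x (int (deg (del_verts G {y}) x))) + (\<Sum>x\<in>verts G - {y}. ?I x)"
    using sum_mono[of "verts G - {y}", OF 2] by (simp add: sum.distrib)
  have 4: "(\<Sum>x\<in>verts G - {y}. ?I x) = int (deg G y)"
  proof -
    have "(\<Sum>x\<in>verts G - {y}. ?I x) = (\<Sum>x\<in>{x \<in> verts G - {y}. {x, y} \<in> edges G}. 1)"
      using sum.inter_filter[of "verts G - {y}" "\<lambda>_. (1::int)" "\<lambda>x. {x, y} \<in> edges G"] fin by simp
    also have "\<dots> = int (card {x \<in> verts G - {y}. {x, y} \<in> edges G})" by simp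
    finally show ?thesis using deg_nbrs[OF sg] by simp
  qed
  have 5: "verts (del_verts G {y}) = verts G - {y}" by simp
  show ?thesis unfolding 5 using 1 3 4 by linarith
qed


definition is_path :: "'a graph \<Rightarrow> 'a list \<Rightarrow> bool" where
  "is_path G p \<longleftrightarrow> p \<noteq> [] \<and> distinct p \<and> set p \<subseteq> verts G \<and>
     (\<forall>i. Suc i < length p \<longrightarrow> adj G (p ! i) (p ! Suc i))"

lemma cycle_exists:
  assumes sg: "simple_graph G" and ne: "verts G \<noteq> {}" and md: "\<forall>x\<in>verts G. deg G x \<ge> 2"
  shows "has_cycle G"
proof -
  have fin: "finite (verts G)" using sg unfolding simple_graph_def by simp
  obtain x0 where x0: "x0 \<in> verts G" using ne by blast
  have P0: "\<exists>p. is_path G p \<and> length p = 1" using x0 by (intro exI[of _ "[x0]"]) (simp add: is_path_def)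
  have bnd: "\<forall>n. (\<exists>p. is_path G p \<and> length p = n) \<longrightarrow> n \<le> card (verts G)"
  proof (intro allI impI)
    fix n assume "\<exists>p. is_path G p \<and> length p = n"
    then obtain p where "is_path G p" "length p = n" by blast
    then show "n \<le> card (verts G)" unfolding is_path_def
      by (metis card_mono distinct_card fin)
  qed
  obtain n where n: "\<exists>p. is_path G p \<and> length p = n"
    and nmax: "\<forall>n'. (\<exists>p. is_path G p \<and> length p = n') \<longrightarrow> n' \<le> n"
    using Nat.ex_has_greatest_nat[OF P0 bnd] by blast
  obtain p where pp: "is_path G p" and lp: "length p = n" using n by blast
  have pmax: "length q \<le> length p" if "is_path G q" for q using nmax that lp by blast
  define p0 where "p0 = p ! 0"
  have pne: "p \<noteq> []" using pp unfolding is_path_def by simp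
  have p0V: "p0 \<in> verts G" using pp pne unfolding is_path_def p0_def by (simp add: subset_iff)
  let ?N = "{x \<in> verts G - {p0}. {x, p0} \<in> edges G}"
  have cardN: "card ?N \<ge> 2" using deg_nbrs[OF sg, of p0] md p0V by simp
  have Nin: "u \<in> set p" if u: "u \<in> ?N" for u
  proof (rule ccontr)
    assume nu: "u \<notin> set p"
    have "is_path G (u # p)"
      unfolding is_path_def
    proof (intro conjI allI impI)
      show "u # p \<noteq> []" by simp
      show "distinct (u # p)" using nu pp unfolding is_path_def by simp
      show "set (u # p) \<subseteq> verts G" using u pp unfolding is_path_def by auto
      fix i assume i: "Suc i < length (u # p)"
      show "adj G ((u # p) ! i) ((u # p) ! Suc i)"
      proof (cases i)
        case 0
        then show ?thesis using u unfolding adj_def p0_def by simp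
      next
        case (Suc j)
        then show ?thesis using pp i unfolding is_path_def by simp
      qed
    qed
    then have "length (u # p) \<le> length p" by (rule pmax)
    then show False by simp
  qed
  have finN: "finite ?N" using fin by simp
  obtain a where a: "a \<in> ?N" using cardN by (metis card.empty ex_in_conv not_numeral_le_zero)
  have "card (?N - {a}) \<ge> 1" using cardN a finN by simp
  then obtain b where b: "b \<in> ?N - {a}" by (metis card.empty ex_in_conv not_one_le_zero)
  obtain u where u: "u \<in> ?N" and u1: "length p \<ge> 2 \<longrightarrow> u \<noteq> p ! 1"
  proof (cases "a = p ! 1")
    case True
    then show ?thesis using that[of b] b by auto
  next
    case False
    then show ?thesis using that[of a] a by auto
  qed
  obtain j where j: "j < length p" "p ! j = u" using Nin[OF u] by (metis in_set_conv_nth)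
  have j0: "j \<noteq> 0" using j u unfolding p0_def by (metis (no_types, lifting) DiffE mem_Collect_eq singletonI)
  have l2: "length p \<ge> 2" using j j0 by linarith
  have j1: "j \<noteq> 1" using j u1 l2 by auto
  define C where "C = take (Suc j) p"
  have lC: "length C = Suc j" using j unfolding C_def by simp
  have "is_cycle G C"
    unfolding is_cycle_def
  proof (intro conjI allI impI)
    show "3 \<le> length C" using lC j0 j1 by linarith
    show "distinct C" using pp unfolding C_def is_path_def by simp
    show "set C \<subseteq> verts G" using pp unfolding C_def is_path_def by (meson order_trans set_take_subset)
    fix i assume i: "i < length C"
    show "adj G (C ! i) (C ! ((i + 1) mod length C))"
    proof (cases "i < j")
      case True
      then have "(i + 1) mod length C = Suc i" using lC by simp
      then show ?thesis using True pp j unfolding C_def is_path_def by simp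
    next
      case False
      then have ij: "i = j" using i lC by simp
      then have "(i + 1) mod length C = 0" using lC by simp
      moreover have "adj G u p0" using u unfolding adj_def by simp
      ultimately show ?thesis using ij j unfolding C_def p0_def by simp
    qed
  qed
  then show ?thesis unfolding has_cycle_def by blast
qed

lemma cycle_mono: "is_cycle (del_verts G S) C \<Longrightarrow> is_cycle G C"
  unfolding is_cycle_def adj_def by auto

lemma acyc_sum: "simple_graph G \<Longrightarrow> \<not> has_cycle G \<Longrightarrow> (\<Sum>x\<in>verts G. int (deg G x) - 2) \<le> 0"
proof (induction "card (verts G)" arbitrary: G rule: less_induct)
  case less
  have fin: "finite (verts G)" using less.prems unfolding simple_graph_def by simp
  show ?case
  proof (cases "verts G = {}")
    case True then show ?thesis by simp
  next
    case ne: False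
    show ?thesis
    proof (cases "\<exists>y\<in>verts G. deg G y < 2")
      case True
      then obtain y where y: "y \<in> verts G" "deg G y < 2" by blast
      let ?G' = "del_verts G {y}"
      have sg': "simple_graph ?G'" using simple_del less.prems by blast
      have nc: "\<not> has_cycle ?G'" using less.prems cycle_mono unfolding has_cycle_def by blast
      have "card (verts ?G') < card (verts G)" using card_Diff1_less[OF fin y(1)] by simp
      then have IH: "(\<Sum>x\<in>verts ?G'. int (deg ?G' x) - 2) \<le> 0" using less.hyps sg' nc by blast
      have "(\<Sum>x\<in>verts G. int (deg G x) - 2) \<le> (int (deg G y) - 2) + int (deg G y) + (\<Sum>x\<in>verts ?G'. int (deg ?G' x) - 2)"
        using sum_del[OF less.prems(1) y(1), of "\<lambda>x d. d - 2"] by simp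
      then show ?thesis using IH y(2) by linarith
    next
      case False
      then have "\<forall>x\<in>verts G. deg G x \<ge> 2" by auto
      then have "has_cycle G" using cycle_exists[OF less.prems(1) ne] by blast
      then show ?thesis using less.prems by blast
    qed
  qed
qed


lemma loop_sub: "loop_result G F X \<Longrightarrow> X \<subseteq> verts G"
  by (induction rule: loop_result.induct) (auto simp: is_cycle_def)

lemma loop_sum:
  "loop_result G F X \<Longrightarrow> simple_graph G \<Longrightarrow> (\<forall>x\<in>verts G - F. deg G x \<le> 2) \<Longrightarrow>
     (\<Sum>x\<in>verts G. int (deg G x) - 2) \<le> 2 * int (card X)"
proof (induction rule: loop_result.induct)
  case (loop_stop G F)
  then show ?case using acyc_sum by simp
next
  case (loop_step G C x F X)
  let ?G' = "del_verts G {x}"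
  have xV: "x \<in> verts G" using loop_step.hyps(1,2) unfolding is_cycle_def by auto
  have sg': "simple_graph ?G'" using simple_del loop_step.prems(1) by blast
  have dg: "\<forall>z\<in>verts ?G' - F. deg ?G' z \<le> 2"
  proof
    fix z assume z: "z \<in> verts ?G' - F"
    then have "deg ?G' z \<le> deg G z" using deg_del_le[OF loop_step.prems(1)] by simp
    moreover have "deg G z \<le> 2" using z loop_step.prems(2) by simp
    ultimately show "deg ?G' z \<le> 2" by simp
  qed
  have IH: "(\<Sum>z\<in>verts ?G'. int (deg ?G' z) - 2) \<le> 2 * int (card X)"
    using loop_step.IH sg' dg by blast
  have "(\<Sum>z\<in>verts G. int (deg G z) - 2) \<le> (int (deg G x) - 2) + int (deg G x) + (\<Sum>z\<in>verts ?G'. int (deg ?G' z) - 2)"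
    using sum_del[OF loop_step.prems(1) xV, of "\<lambda>x d. d - 2"] by simp
  moreover have "deg G x \<le> 2" using loop_step.prems(2) xV loop_step.hyps(3) by blast
  moreover have "card (insert x X) = Suc (card X)"
  proof -
    have "X \<subseteq> verts G - {x}" using loop_sub[OF loop_step.hyps(4)] by simp
    moreover have "finite (verts G)" using loop_step.prems(1) unfolding simple_graph_def by simp
    ultimately show ?thesis by (meson DiffD2 finite_Diff rev_finite_subset singletonI subsetD card_insert_disjoint)
  qed
  ultimately show ?case using IH by simp
qed

definition gF :: "'a set \<Rightarrow> 'a \<Rightarrow> int \<Rightarrow> int" where
  "gF F x d = (if x \<in> F then d - 2 else min 0 (d - 2))"

definition TT :: "'a graph \<Rightarrow> 'a set \<Rightarrow> int" where
  "TT G F = (\<Sum>x\<in>verts G. gF F x (int (deg G x)))"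

lemma gF_mono: "gF F x d \<le> gF F x (d - 1) + 1"
  by (simp add: gF_def min_def)

lemma TT_del: "simple_graph G \<Longrightarrow> y \<in> verts G \<Longrightarrow>
    TT G F \<le> gF F y (int (deg G y)) + int (deg G y) + TT (del_verts G {y}) F"
  unfolding TT_def by (rule sum_del[where g="gF F"]) (simp_all only: gF_mono)

lemma TT_del_F: "TT (del_verts G {y}) (F - {y}) = TT (del_verts G {y}) F"
  unfolding TT_def by (rule sum.cong) (auto simp: gF_def)

lemma TT_insert:
  assumes fin: "finite (verts G)" and v: "v \<in> verts G" "v \<notin> F" and d: "deg G v \<ge> 2"
  shows "TT G (insert v F) = TT G F + (int (deg G v) - 2)"
proof -
  have "TT G (insert v F) = gF (insert v F) v (int (deg G v)) + (\<Sum>x\<in>verts G - {v}. gF (insert v F) x (int (deg G x)))"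
    unfolding TT_def using sum.remove[OF fin v(1)] by simp
  also have "(\<Sum>x\<in>verts G - {v}. gF (insert v F) x (int (deg G x))) = (\<Sum>x\<in>verts G - {v}. gF F x (int (deg G x)))"
    by (rule sum.cong) (auto simp: gF_def)
  also have "TT G F = gF F v (int (deg G v)) + (\<Sum>x\<in>verts G - {v}. gF F x (int (deg G x)))"
    unfolding TT_def using sum.remove[OF fin v(1)] by simp
  ultimately show ?thesis using v d by (simp add: gF_def)
qed

lemma TT_nonneg: "\<forall>x\<in>verts G. deg G x \<ge> 2 \<Longrightarrow> TT G F \<ge> 0"
  unfolding TT_def by (rule sum_nonneg) (auto simp: gF_def)

lemma TT_empty: "\<forall>x\<in>verts G. deg G x \<ge> 2 \<Longrightarrow> TT G {} = 0"
  unfolding TT_def by (rule sum.neutral) (auto simp: gF_def)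

lemma sol_sub: "sol_path G k F Vm Fp \<Longrightarrow> Vm \<subseteq> verts G"
  by (induction rule: sol_path.induct) (auto dest: loop_sub simp: reaches_step3_def)

lemma card_ins_Vm:
  assumes "simple_graph G" "v \<in> verts G" "Vm \<subseteq> verts (del_verts G {v})"
  shows "card (insert v Vm) = Suc (card Vm)"
proof -
  have "finite (verts G)" using assms(1) unfolding simple_graph_def by simp
  then have "finite (verts (del_verts G {v}))" by simp
  then have "finite Vm" using assms(3) by (rule finite_subset[rotated])
  moreover have "v \<notin> Vm" using assms(3) by auto
  ultimately show ?thesis by simp
qed


lemma lemA:
  "sol_path G k F Vm Fp \<Longrightarrow> simple_graph G \<Longrightarrow> m \<ge> 1 \<Longrightarrow>
     (\<forall>x\<in>verts G - F. int (deg G x) \<le> m + 2) \<Longrightarrow>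
     m * int (card Fp) + TT G F \<le> 3 * m * int (card Vm)"
proof (induction arbitrary: m rule: sol_path.induct)
  case (step0 k G F)
  then show ?case by (simp add: TT_def)
next
  case (step1 k v G F Vm Fp)
  let ?G' = "del_verts G {v}"
  have sg': "simple_graph ?G'" using simple_del step1.prems(1) by blast
  have dg: "\<forall>x\<in>verts ?G' - (F - {v}). int (deg ?G' x) \<le> m + 2"
  proof
    fix x assume x: "x \<in> verts ?G' - (F - {v})"
    then have "deg ?G' x \<le> deg G x" using deg_del_le[OF step1.prems(1)] by simp
    moreover have "x \<in> verts G - F" using x by auto
    then have "int (deg G x) \<le> m + 2" using step1.prems(3) by blast
    ultimately show "int (deg ?G' x) \<le> m + 2" by simp
  qed
  have IH: "m * int (card Fp) + TT ?G' (F - {v}) \<le> 3 * m * int (card Vm)"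
    using step1.IH[OF sg' step1.prems(2) dg] .
  have T1: "TT G F \<le> gF F v (int (deg G v)) + int (deg G v) + TT ?G' F"
    using TT_del[OF step1.prems(1) step1.hyps(2)] .
  have "gF F v (int (deg G v)) \<le> int (deg G v) - 2" using step1.hyps(3) by (simp add: gF_def)
  then have "TT G F \<le> TT ?G' F" using T1 step1.hyps(3) by linarith
  then show ?case using IH TT_del_F[of G v F] by linarith
next
  case (step2 k G v F Vm Fp)
  let ?G' = "del_verts G {v}"
  have sg': "simple_graph ?G'" using simple_del step2.prems(1) by blast
  have dg: "\<forall>x\<in>verts ?G' - F. int (deg ?G' x) \<le> m + 2"
  proof
    fix x assume x: "x \<in> verts ?G' - F"
    then have "deg ?G' x \<le> deg G x" using deg_del_le[OF step2.prems(1)] by simp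
    moreover have "int (deg G x) \<le> m + 2" using x step2.prems(3) by simp
    ultimately show "int (deg ?G' x) \<le> m + 2" by simp
  qed
  have IH: "m * int (card Fp) + TT ?G' F \<le> 3 * m * int (card Vm)"
    using step2.IH[OF sg' step2.prems(2) dg] .
  have vV: "v \<in> verts G" "v \<notin> F" using step2.hyps(4) by auto
  have T1: "TT G F \<le> gF F v (int (deg G v)) + int (deg G v) + TT ?G' F"
    using TT_del[OF step2.prems(1) vV(1)] .
  have "gF F v (int (deg G v)) \<le> 0" using vV by (simp add: gF_def)
  moreover have "int (deg G v) \<le> m + 2" using step2.prems(3) step2.hyps(4) by blast
  ultimately have "TT G F \<le> TT ?G' F + m + 2" using T1 by linarith
  moreover have "card (insert v Vm) = Suc (card Vm)"
    using card_ins_Vm[OF step2.prems(1) vV(1) sol_sub[OF step2.hyps(6)]] .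
  ultimately show ?case using IH step2.prems(2) by (simp add: algebra_simps)
next
  case (step4 G k F v X)
  have r: "\<forall>u\<in>verts G. deg G u \<ge> 2" "\<forall>u\<in>verts G - F. deg G u \<le> deg G v"
    using step4.hyps(1) unfolding reaches_step3_def by auto
  have d2: "\<forall>u\<in>verts G - F. deg G u \<le> 2" using r(2) step4.hyps(2) by simp
  have "TT G F = (\<Sum>x\<in>verts G. int (deg G x) - 2)"
    unfolding TT_def
  proof (rule sum.cong)
    fix x assume x: "x \<in> verts G"
    show "gF F x (int (deg G x)) = int (deg G x) - 2"
    proof (cases "x \<in> F")
      case True then show ?thesis by (simp add: gF_def)
    next
      case False
      then have "deg G x = 2" using x r(1) d2 by (meson DiffI le_antisym)
      then show ?thesis using False by (simp add: gF_def)
    qed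
  qed simp
  also have "\<dots> \<le> 2 * int (card X)" using loop_sum[OF step4.hyps(3) step4.prems(1) d2] .
  finally have "TT G F \<le> 2 * int (card X)" .
  moreover have "2 * int (card X) \<le> 3 * m * int (card X)" using step4.prems(2)
    by (simp add: mult_right_mono)
  ultimately show ?case by simp
next
  case (step5 G k F v Vm Fp)
  let ?G' = "del_verts G {v}"
  have sg': "simple_graph ?G'" using simple_del step5.prems(1) by blast
  have dg: "\<forall>x\<in>verts ?G' - F. int (deg ?G' x) \<le> m + 2"
  proof
    fix x assume x: "x \<in> verts ?G' - F"
    then have "deg ?G' x \<le> deg G x" using deg_del_le[OF step5.prems(1)] by simp
    moreover have "int (deg G x) \<le> m + 2" using x step5.prems(3) by simp
    ultimately show "int (deg ?G' x) \<le> m + 2" by simp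
  qed
  have IH: "m * int (card Fp) + TT ?G' F \<le> 3 * m * int (card Vm)"
    using step5.IH[OF sg' step5.prems(2) dg] .
  have vV: "v \<in> verts G" "v \<notin> F" using step5.hyps(1) unfolding reaches_step3_def by auto
  have T1: "TT G F \<le> gF F v (int (deg G v)) + int (deg G v) + TT ?G' F"
    using TT_del[OF step5.prems(1) vV(1)] .
  have "gF F v (int (deg G v)) \<le> 0" using vV by (simp add: gF_def)
  moreover have "int (deg G v) \<le> m + 2" using step5.prems(3) vV by blast
  ultimately have "TT G F \<le> TT ?G' F + m + 2" using T1 by linarith
  moreover have "card (insert v Vm) = Suc (card Vm)"
    using card_ins_Vm[OF step5.prems(1) vV(1) sol_sub[OF step5.hyps(3)]] .
  ultimately show ?case using IH step5.prems(2) by (simp add: algebra_simps)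
next
  case (step6 G k F v Vm Fp)
  have r: "\<forall>u\<in>verts G. deg G u \<ge> 2" "\<forall>u\<in>verts G - F. deg G u \<le> deg G v"
    "v \<in> verts G" "v \<notin> F"
    using step6.hyps(1) unfolding reaches_step3_def by auto
  have fin: "finite (verts G)" using step6.prems(1) unfolding simple_graph_def by simp
  define D where "D = int (deg G v)"
  have D3: "D \<ge> 3" using r(1,3) step6.hyps(2) unfolding D_def by fastforce
  have DM: "D \<le> m + 2" using step6.prems(3) r(3,4) unfolding D_def by blast
  have dg: "\<forall>x\<in>verts G - insert v F. int (deg G x) \<le> (D - 2) + 2"
    using r(2) unfolding D_def by auto
  have IH: "(D - 2) * int (card Fp) + TT G (insert v F) \<le> 3 * (D - 2) * int (card Vm)"
    using step6.IH[OF step6.prems(1) _ dg] D3 by simp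
  have TI: "TT G (insert v F) = TT G F + (D - 2)"
    using TT_insert[OF fin r(3,4)] r(1,3) unfolding D_def by simp
  have T0: "TT G F \<ge> 0" using TT_nonneg r(1) by blast
  define a where "a = 3 * int (card Vm) - int (card Fp) - 1"
  have Ta: "TT G F \<le> (D - 2) * a" using IH TI unfolding a_def by (simp add: algebra_simps)
  have a0: "a \<ge> 0"
  proof (rule ccontr)
    assume "\<not> a \<ge> 0"
    then have "(D - 2) * a < 0" using D3 by (simp add: mult_pos_neg)
    then show False using Ta T0 by linarith
  qed
  have "(D - 2) * a \<le> m * a" using a0 DM by (simp add: mult_right_mono)
  then have "TT G F \<le> m * a" using Ta by linarith
  then have "m * (int (card Fp) + 1) + TT G F \<le> 3 * m * int (card Vm)"
    unfolding a_def by (simp add: algebra_simps)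
  moreover have "int (card (insert v Fp)) \<le> int (card Fp) + 1"
    by (cases "finite Fp") (simp_all add: card_insert_if)
  moreover have "m \<ge> 0" using step6.prems(2) by simp
  ultimately have "m * int (card (insert v Fp)) \<le> m * (int (card Fp) + 1)"
    by (simp add: mult_left_mono)
  then show ?case using \<open>m * (int (card Fp) + 1) + TT G F \<le> 3 * m * int (card Vm)\<close> by linarith
qed

lemma lemB:
  "sol_path G k F Vm Fp \<Longrightarrow> simple_graph G \<Longrightarrow> F = {} \<Longrightarrow> card Fp \<le> 3 * card Vm"
proof (induction rule: sol_path.induct)
  case (step0 k G F)
  then show ?case by simp
next
  case (step1 k v G F Vm Fp)
  then show ?case using simple_del by blast
next
  case (step2 k G v F Vm Fp)
  then show ?case unfolding two_nbrs_same_comp_def same_comp_def by simp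
next
  case (step4 G k F v X)
  then show ?case by simp
next
  case (step5 G k F v Vm Fp)
  have vV: "v \<in> verts G" using step5.hyps(1) unfolding reaches_step3_def by auto
  have "card (insert v Vm) = Suc (card Vm)"
    using card_ins_Vm[OF step5.prems(1) vV sol_sub[OF step5.hyps(3)]] .
  then show ?case using step5.IH step5.prems simple_del by fastforce
next
  case (step6 G k F v Vm Fp)
  have sp: "sol_path G k F Vm (insert v Fp)"
    using sol_path.step6[OF step6.hyps(1,2,3)] .
  have r: "\<forall>u\<in>verts G. deg G u \<ge> 2" "\<forall>u\<in>verts G - F. deg G u \<le> deg G v"
    "v \<in> verts G" "v \<notin> F"
    using step6.hyps(1) unfolding reaches_step3_def by auto
  define m where "m = int (deg G v) - 2"
  have m1: "m \<ge> 1" using r(1,3) step6.hyps(2) unfolding m_def by fastforce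
  have dg: "\<forall>x\<in>verts G - F. int (deg G x) \<le> m + 2" using r(2) unfolding m_def by auto
  have "m * int (card (insert v Fp)) + TT G F \<le> 3 * m * int (card Vm)"
    using lemA[OF sp step6.prems(1) m1 dg] .
  moreover have "TT G F = 0" using TT_empty r(1) step6.prems(2) by blast
  ultimately have "m * int (card (insert v Fp)) \<le> m * (3 * int (card Vm))" by simp
  then have "int (card (insert v Fp)) \<le> 3 * int (card Vm)" using m1 by simp
  then show ?case by simp
qed

theorem mainTheorem6:
  fixes G :: "'a graph" and k :: int and Vm Fp :: "'a set"
  assumes "simple_graph G"
    and "sol_path G k {} Vm Fp"
  shows "card Fp \<le> 3 * card Vm"
  using lemB[OF assms(2) assms(1)] by simp

end
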